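(* Let $I$ be a set of players, for each $i\in I$ let $G_i$ be a compact convex subset of a Hausdorff locally convex topological vector space, and let $G=(G_i,P_i,Q_i)_{i\in I}$ be a general qualitative game satisfying property $T$, where $P_i,Q_i:\prod_{j\in I}G_j\to 2^{G_i}$ satisfy for each $i\in I$: (i) $y_i\in Q_i(y_i,x_{-i})$ for each $y_i\in G_i$ and each $x_{-i}\in G_{-i}$; (ii) $Q_i$ has convex closed values; (iii) $x_i\notin P_i(x)$ for each $x\in\prod_{j\in I}G_j$; (iv) $P_i$ is upper semicontinuous with closed convex values in $G_i$. Then: (a) if $G\to^* H$ and there exist $i\in I$ and $x_i,y_i\in G_i$ with $y_i\succ_H x_i$, then there exists $x_i^*\in H_i$ such that $x_i^*\succ_H x_i$ and $z_i\not\succ_H x_i^*$ for all $z_i\in G_i$; (b) if $M$ is a nonempty maximal $(\to^* )$-reduction of $G$, then $M$ is the unique maximal $(\to^* )$-reduction of $G$.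
   Context: $I$ is a nonempty set; $X=\prod_{j\in I}G_j$, $G_{-i}=\prod_{j\ne i}G_j$, $x=(x_i,x_{-i})$. A general qualitative game is $G=(G_i,P_i,Q_i)_{i\in I}$ with correspondences $P_i,Q_i:X\to 2^{G_i}$. It satisfies property $T$ if for each $i$ and each $x\in X$: $P_i(x)\subseteq Q_i(x)$, and $y_i\in P_i(x)$ implies $Q_i(y_i,x_{-i})\subseteq P_i(x)$. A pairing of $G$ is a family $H=(H_i)_{i\in I}$ with $H_i\subseteq G_i$ (the $P_i$ restricted to $\prod_jH_j$); $H_{-i}=\prod_{j\ne i}H_j$; $H$ is nonempty if every $H_i\neq\emptyset$. For $x_i,y_i\in G_i$: $y_i\succ_H x_i$ iff $H_{-i}\neq\emptyset$ and $y_i\in P_i(x_i,x_{-i})$ for all $x_{-i}\in H_{-i}$. For pairings $R,S$ with $S_i\subseteq R_i$ for all $i$: $R\to S$ means for every $i$ and $x_i\in R_i\setminus S_i$, $\bigcap_{x_{-i}\in R_{-i}}P_i(x_i,x_{-i})\ne\emptyset$; it is fast if moreover for every $i$ and $x_i\in R_i$, $\bigcap_{x_{-i}\in R_{-i}}P_i(x_i,x_{-i})\neq\emptyset$ implies $x_i\notin S_i$. $G\to^*H$ means there is a finite or countably infinite sequence of pairings $R^0=G,R^1,\dots$ with $R^t\to R^{t+1}$ fast for each $t$ and $H_i=\bigcap_tR^t_i$ for each $i$. $H$ is a maximal $(\to^* )$-reduction of $G$ if $G\to^*H$ and, for pairings $H'$ with $H'_i\subseteq H_i$, $H\to H'$ holds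 only for $H'=H$. *)

theory Defs
  imports "HOL-Analysis.Analysis"
begin

definition lc_tvs :: "'a::{real_vector,t2_space} itself \<Rightarrow> bool" where
  "lc_tvs _ \<longleftrightarrow>
     continuous_on UNIV (\<lambda>p::'a \<times> 'a. fst p + snd p) \<and>
     continuous_on UNIV (\<lambda>p::real \<times> 'a. fst p *\<^sub>R snd p) \<and>
     (\<forall>x::'a. \<forall>U. open U \<and> x \<in> U \<longrightarrow> (\<exists>V. open V \<and> convex V \<and> x \<in> V \<and> V \<subseteq> U))"

text \<open>Strategy profiles: X = PiE I G. The profile (y_i, x_{-i}) is x(i := y).\<close>

definition usc_corr ::
  "'i set \<Rightarrow> ('i \<Rightarrow> 'a::topological_space set) \<Rightarrow> (('i \<Rightarrow> 'a) \<Rightarrow> 'a set) \<Rightarrow> bool" where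
  "usc_corr I G F \<longleftrightarrow>
     (\<forall>x \<in> PiE I G. \<forall>V. open V \<and> F x \<subseteq> V \<longrightarrow>
        (\<exists>U. openin (product_topology (\<lambda>j. subtopology euclidean (G j)) I) U \<and> x \<in> U \<and>
             (\<forall>y \<in> U. F y \<subseteq> V)))"

definition property_T ::
  "'i set \<Rightarrow> ('i \<Rightarrow> 'a set) \<Rightarrow> ('i \<Rightarrow> ('i \<Rightarrow> 'a) \<Rightarrow> 'a set) \<Rightarrow> ('i \<Rightarrow> ('i \<Rightarrow> 'a) \<Rightarrow> 'a set) \<Rightarrow> bool" where
  "property_T I G P Q \<longleftrightarrow>
     (\<forall>i \<in> I. \<forall>x \<in> PiE I G. P i x \<subseteq> Q i x \<and>
        (\<forall>y \<in> P i x. Q i (x(i := y)) \<subseteq> P i x))"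

definition pairing :: "'i set \<Rightarrow> ('i \<Rightarrow> 'a set) \<Rightarrow> ('i \<Rightarrow> 'a set) \<Rightarrow> bool" where
  "pairing I G H \<longleftrightarrow> (\<forall>i \<in> I. H i \<subseteq> G i)"

definition succ_H ::
  "'i set \<Rightarrow> ('i \<Rightarrow> ('i \<Rightarrow> 'a) \<Rightarrow> 'a set) \<Rightarrow> ('i \<Rightarrow> 'a set) \<Rightarrow> 'i \<Rightarrow> 'a \<Rightarrow> 'a \<Rightarrow> bool" where
  "succ_H I P H i y x \<longleftrightarrow>
     PiE (I - {i}) H \<noteq> {} \<and> (\<forall>z \<in> PiE (I - {i}) H. y \<in> P i (z(i := x)))"

definition reduces ::
  "'i set \<Rightarrow> ('i \<Rightarrow> 'a set) \<Rightarrow> ('i \<Rightarrow> ('i \<Rightarrow> 'a) \<Rightarrow> 'a set) \<Rightarrow> ('i \<Rightarrow> 'a set) \<Rightarrow> ('i \<Rightarrow> 'a set) \<Rightarrow> bool" where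
  "reduces I G P R S \<longleftrightarrow>
     pairing I G R \<and> pairing I G S \<and> (\<forall>i \<in> I. S i \<subseteq> R i) \<and>
     (\<forall>i \<in> I. \<forall>x \<in> R i - S i. (\<Inter>z \<in> PiE (I - {i}) R. P i (z(i := x))) \<noteq> {})"

definition fast_reduces ::
  "'i set \<Rightarrow> ('i \<Rightarrow> 'a set) \<Rightarrow> ('i \<Rightarrow> ('i \<Rightarrow> 'a) \<Rightarrow> 'a set) \<Rightarrow> ('i \<Rightarrow> 'a set) \<Rightarrow> ('i \<Rightarrow> 'a set) \<Rightarrow> bool" where
  "fast_reduces I G P R S \<longleftrightarrow>
     reduces I G P R S \<and>
     (\<forall>i \<in> I. \<forall>x \<in> R i. (\<Inter>z \<in> PiE (I - {i}) R. P i (z(i := x))) \<noteq> {} \<longrightarrow> x \<notin> S i)"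

definition reduces_star ::
  "'i set \<Rightarrow> ('i \<Rightarrow> 'a set) \<Rightarrow> ('i \<Rightarrow> ('i \<Rightarrow> 'a) \<Rightarrow> 'a set) \<Rightarrow> ('i \<Rightarrow> 'a set) \<Rightarrow> bool" where
  "reduces_star I G P H \<longleftrightarrow>
     (\<exists>R :: nat \<Rightarrow> 'i \<Rightarrow> 'a set. (\<forall>i \<in> I. R 0 i = G i) \<and>
        ((\<exists>n. (\<forall>t < n. fast_reduces I G P (R t) (R (Suc t))) \<and>
              (\<forall>i \<in> I. H i = (\<Inter>t \<in> {..n}. R t i))) \<or>
         ((\<forall>t. fast_reduces I G P (R t) (R (Suc t))) \<and>
              (\<forall>i \<in> I. H i = (\<Inter>t. R t i)))))"

definition maximal_reduction ::
  "'i set \<Rightarrow> ('i \<Rightarrow> 'a set) \<Rightarrow> ('i \<Rightarrow> ('i \<Rightarrow> 'a) \<Rightarrow> 'a set) \<Rightarrow> ('i \<Rightarrow> 'a set) \<Rightarrow> bool" where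
  "maximal_reduction I G P H \<longleftrightarrow>
     reduces_star I G P H \<and>
     (\<forall>H'. (\<forall>i \<in> I. H' i \<subseteq> H i) \<and> reduces I G P H H' \<longrightarrow> (\<forall>i \<in> I. H' i = H i))"

end

theory Submission
  imports Defs
begin
lemma star_sub:
  assumes "reduces_star I G P H" "i \<in> I"
  shows "H i \<subseteq> G i"
proof -
  from assms(1) obtain R :: "nat \<Rightarrow> _" where R0: "\<forall>i \<in> I. R 0 i = G i" and
    c: "(\<exists>n. (\<forall>t < n. fast_reduces I G P (R t) (R (Suc t))) \<and>
              (\<forall>i \<in> I. H i = (\<Inter>t \<in> {..n}. R t i))) \<or>
         ((\<forall>t. fast_reduces I G P (R t) (R (Suc t))) \<and>
              (\<forall>i \<in> I. H i = (\<Inter>t. R t i)))"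
    unfolding reduces_star_def by blast
  from c show ?thesis
  proof
    assume "\<exists>n. (\<forall>t < n. fast_reduces I G P (R t) (R (Suc t))) \<and>
              (\<forall>i \<in> I. H i = (\<Inter>t \<in> {..n}. R t i))"
    then obtain n where "\<forall>i \<in> I. H i = (\<Inter>t \<in> {..n}. R t i)" by blast
    thus ?thesis using R0 assms(2) by auto
  next
    assume "(\<forall>t. fast_reduces I G P (R t) (R (Suc t))) \<and> (\<forall>i \<in> I. H i = (\<Inter>t. R t i))"
    thus ?thesis using R0 assms(2) by auto
  qed
qed

lemma seq_elim:
  assumes R0: "\<forall>i \<in> I. R 0 i = G i"
    and red: "\<forall>t < n. reduces I G P (R t) (R (Suc t))"
    and i: "i \<in> I" and m: "m \<in> G i"
  shows "t \<le> n \<Longrightarrow> m \<notin> R t i \<Longrightarrow> \<exists>s<t. m \<in> R s i \<and> m \<notin> R (Suc s) i"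
proof (induction t)
  case 0
  then show ?case using R0 i m by auto
next
  case (Suc t)
  show ?case
  proof (cases "m \<in> R t i")
    case True
    then show ?thesis using Suc by auto
  next
    case False
    then obtain s where "s < t" "m \<in> R s i \<and> m \<notin> R (Suc s) i" using Suc by auto
    then show ?thesis by (intro exI[of _ s]) auto
  qed
qed

lemma seq_keep:
  assumes R0: "\<forall>i \<in> I. R 0 i = G i"
    and red: "\<forall>t < n. reduces I G P (R t) (R (Suc t))"
    and MG: "\<forall>j \<in> I. M j \<subseteq> G j"
    and nd: "\<forall>j \<in> I. \<forall>x \<in> M j. (\<Inter>z \<in> PiE (I - {j}) M. P j (z(j := x))) = {}"
  shows "t \<le> n \<Longrightarrow> \<forall>j \<in> I. M j \<subseteq> R t j"
proof (induction t)
  case 0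
  then show ?case using R0 MG by auto
next
  case (Suc t)
  hence IH: "\<forall>j \<in> I. M j \<subseteq> R t j" by auto
  have rt: "reduces I G P (R t) (R (Suc t))" using red Suc by auto
  show ?case
  proof (intro ballI subsetI)
    fix j x assume j: "j \<in> I" and x: "x \<in> M j"
    show "x \<in> R (Suc t) j"
    proof (rule ccontr)
      assume "x \<notin> R (Suc t) j"
      hence "x \<in> R t j - R (Suc t) j" using IH j x by auto
      hence ne: "(\<Inter>z \<in> PiE (I - {j}) (R t). P j (z(j := x))) \<noteq> {}"
        using rt j unfolding reduces_def by blast
      have "PiE (I - {j}) M \<subseteq> PiE (I - {j}) (R t)" using IH by (intro PiE_mono) auto
      hence "(\<Inter>z \<in> PiE (I - {j}) (R t). P j (z(j := x))) \<subseteq> (\<Inter>z \<in> PiE (I - {j}) M. P j (z(j := x)))"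
        by blast
      moreover have "(\<Inter>z \<in> PiE (I - {j}) M. P j (z(j := x))) = {}" using nd j x by simp
      ultimately show False using ne by (simp add: subset_empty)
    qed
  qed
qed

lemma star_keep:
  assumes "reduces_star I G P H"
    and MG: "\<forall>j \<in> I. M j \<subseteq> G j"
    and nd: "\<forall>j \<in> I. \<forall>x \<in> M j. (\<Inter>z \<in> PiE (I - {j}) M. P j (z(j := x))) = {}"
    and j: "j \<in> I"
  shows "M j \<subseteq> H j"
proof -
  from assms(1) obtain R :: "nat \<Rightarrow> _" where R0: "\<forall>i \<in> I. R 0 i = G i" and
    c: "(\<exists>n. (\<forall>t < n. fast_reduces I G P (R t) (R (Suc t))) \<and>
              (\<forall>i \<in> I. H i = (\<Inter>t \<in> {..n}. R t i))) \<or>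
         ((\<forall>t. fast_reduces I G P (R t) (R (Suc t))) \<and>
              (\<forall>i \<in> I. H i = (\<Inter>t. R t i)))"
    unfolding reduces_star_def by blast
  from c show ?thesis
  proof
    assume "\<exists>n. (\<forall>t < n. fast_reduces I G P (R t) (R (Suc t))) \<and>
              (\<forall>i \<in> I. H i = (\<Inter>t \<in> {..n}. R t i))"
    then obtain n where f: "\<forall>t < n. fast_reduces I G P (R t) (R (Suc t))"
       and h: "\<forall>i \<in> I. H i = (\<Inter>t \<in> {..n}. R t i)" by blast
    have r: "\<forall>t < n. reduces I G P (R t) (R (Suc t))" using f by (simp add: fast_reduces_def)
    have "\<forall>t \<le> n. M j \<subseteq> R t j" using seq_keep[OF R0 r MG nd] j by blast
    thus ?thesis using h j by auto
  next
    assume a: "(\<forall>t. fast_reduces I G P (R t) (R (Suc t))) \<and> (\<forall>i \<in> I. H i = (\<Inter>t. R t i))"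
    have "M j \<subseteq> R t j" for t
    proof -
      have r: "\<forall>s < t. reduces I G P (R s) (R (Suc s))" using a by (simp add: fast_reduces_def)
      show ?thesis using seq_keep[OF R0 r MG nd] j by blast
    qed
    thus ?thesis using a j by auto
  qed
qed

lemma star_elim:
  assumes "reduces_star I G P H" and i: "i \<in> I" and m: "m \<in> G i" and mH: "m \<notin> H i"
  shows "\<exists>w. \<forall>z \<in> PiE (I - {i}) H. w \<in> P i (z(i := m))"
proof -
  from assms(1) obtain R :: "nat \<Rightarrow> _" where R0: "\<forall>i \<in> I. R 0 i = G i" and
    c: "(\<exists>n. (\<forall>t < n. fast_reduces I G P (R t) (R (Suc t))) \<and>
              (\<forall>i \<in> I. H i = (\<Inter>t \<in> {..n}. R t i))) \<or>
         ((\<forall>t. fast_reduces I G P (R t) (R (Suc t))) \<and>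
              (\<forall>i \<in> I. H i = (\<Inter>t. R t i)))"
    unfolding reduces_star_def by blast
  have key: "\<exists>w. \<forall>z \<in> PiE (I - {i}) H. w \<in> P i (z(i := m))"
    if r: "\<forall>t < n. reduces I G P (R t) (R (Suc t))" and tn: "t \<le> n" and mt: "m \<notin> R t i"
      and HR: "\<forall>s \<le> n. \<forall>j \<in> I. H j \<subseteq> R s j" for n t
  proof -
    obtain s where s: "s < t" "m \<in> R s i" "m \<notin> R (Suc s) i"
      using seq_elim[OF R0 r i m tn mt] by blast
    have rs: "reduces I G P (R s) (R (Suc s))" using r s tn by auto
    have ne: "(\<Inter>z \<in> PiE (I - {i}) (R s). P i (z(i := m))) \<noteq> {}"
      using rs s i unfolding reduces_def by blast
    then obtain w where w: "w \<in> (\<Inter>z \<in> PiE (I - {i}) (R s). P i (z(i := m)))" by blast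
    have "PiE (I - {i}) H \<subseteq> PiE (I - {i}) (R s)" using HR s tn by (intro PiE_mono) auto
    then show ?thesis
    proof (intro exI[of _ w] ballI)
      fix z assume "PiE (I - {i}) H \<subseteq> PiE (I - {i}) (R s)" "z \<in> PiE (I - {i}) H"
      hence "z \<in> PiE (I - {i}) (R s)" by blast
      thus "w \<in> P i (z(i := m))" using w by blast
    qed
  qed
  from c show ?thesis
  proof
    assume "\<exists>n. (\<forall>t < n. fast_reduces I G P (R t) (R (Suc t))) \<and>
              (\<forall>i \<in> I. H i = (\<Inter>t \<in> {..n}. R t i))"
    then obtain n where f: "\<forall>t < n. fast_reduces I G P (R t) (R (Suc t))"
       and h: "\<forall>i \<in> I. H i = (\<Inter>t \<in> {..n}. R t i)" by blast
    have r: "\<forall>t < n. reduces I G P (R t) (R (Suc t))" using f by (simp add: fast_reduces_def)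
    obtain t where "t \<le> n" "m \<notin> R t i" using h i mH by auto
    moreover have "\<forall>s \<le> n. \<forall>j \<in> I. H j \<subseteq> R s j" using h by auto
    ultimately show ?thesis using key[OF r] by blast
  next
    assume a: "(\<forall>t. fast_reduces I G P (R t) (R (Suc t))) \<and> (\<forall>i \<in> I. H i = (\<Inter>t. R t i))"
    obtain t where t: "m \<notin> R t i" using a i mH by auto
    have r: "\<forall>s < t. reduces I G P (R s) (R (Suc s))" using a by (simp add: fast_reduces_def)
    have "\<forall>s \<le> t. \<forall>j \<in> I. H j \<subseteq> R s j" using a by auto
    thus ?thesis using key[OF r _ t] by blast
  qed
qed

lemma maximal_nd:
  assumes "maximal_reduction I G P M"
  shows "\<forall>j \<in> I. \<forall>x \<in> M j. (\<Inter>z \<in> PiE (I - {j}) M. P j (z(j := x))) = {}"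
proof (intro ballI, rule ccontr)
  fix j x assume j: "j \<in> I" and x: "x \<in> M j" and ne: "(\<Inter>z \<in> PiE (I - {j}) M. P j (z(j := x))) \<noteq> {}"
  have st: "reduces_star I G P M" and mx: "\<forall>H'. (\<forall>i \<in> I. H' i \<subseteq> M i) \<and> reduces I G P M H' \<longrightarrow> (\<forall>i \<in> I. H' i = M i)"
    using assms unfolding maximal_reduction_def by auto
  define M' where "M' = M(j := M j - {x})"
  have MG: "\<forall>i \<in> I. M i \<subseteq> G i" using star_sub[OF st] by blast
  have "reduces I G P M M'"
    unfolding reduces_def pairing_def using MG ne by (auto simp: M'_def split: if_splits)
  moreover have "\<forall>i \<in> I. M' i \<subseteq> M i" by (auto simp: M'_def)
  ultimately have "M' j = M j" using mx j by blast
  thus False using x by (auto simp: M'_def)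
qed

lemma partb:
  assumes "maximal_reduction I G P M" "maximal_reduction I G P M'" "i \<in> I"
  shows "M' i = M i"
proof -
  have s1: "reduces_star I G P M" "reduces_star I G P M'" using assms unfolding maximal_reduction_def by auto
  show ?thesis
  proof
    show "M' i \<subseteq> M i"
      by (rule star_keep[OF s1(1) _ maximal_nd[OF assms(2)] assms(3)]) (use star_sub[OF s1(2)] in blast)
    show "M i \<subseteq> M' i"
      by (rule star_keep[OF s1(2) _ maximal_nd[OF assms(1)] assms(3)]) (use star_sub[OF s1(1)] in blast)
  qed
qed


lemma chain_max:
  assumes "finite F" "F \<noteq> {}" "F \<subseteq> C"
    and ch: "\<forall>a\<in>C. \<forall>b\<in>C. Q a b \<or> Q b a"
    and tr: "\<forall>a\<in>C. \<forall>b\<in>C. \<forall>c\<in>C. Q a b \<longrightarrow> Q b c \<longrightarrow> Q a c"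
    and rf: "\<forall>a\<in>C. Q a a"
  shows "\<exists>m\<in>F. \<forall>c\<in>F. Q c m"
  using assms(1,2,3)
proof (induction F rule: finite_ne_induct)
  case (singleton x)
  then show ?case using rf by auto
next
  case (insert x F)
  then obtain m where m: "m \<in> F" "\<forall>c\<in>F. Q c m" by auto
  have xC: "x \<in> C" and mC: "m \<in> C" using insert m by auto
  show ?case
  proof (cases "Q x m")
    case True
    then show ?thesis using m by auto
  next
    case False
    hence "Q m x" using ch xC mC by blast
    hence "\<forall>c\<in>insert x F. Q c x" using m tr insert rf xC mC by blast
    thus ?thesis by auto
  qed
qed

lemma parta:
  fixes I :: "'i set"
    and G :: "'i \<Rightarrow> 'a::{real_vector,t2_space} set"
    and P Q :: "'i \<Rightarrow> ('i \<Rightarrow> 'a) \<Rightarrow> 'a set"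
  assumes G_compact: "\<forall>i \<in> I. compact (G i)"
    and P_into: "\<forall>i \<in> I. \<forall>x \<in> PiE I G. P i x \<subseteq> G i"
    and T: "property_T I G P Q"
    and iii_cond: "\<forall>i \<in> I. \<forall>x \<in> PiE I G. x i \<notin> P i x"
    and iv_vals: "\<forall>i \<in> I. \<forall>x \<in> PiE I G. closed (P i x) \<and> convex (P i x)"
    and st: "reduces_star I G P H" and i: "i \<in> I" and x: "x \<in> G i" and y: "y \<in> G i"
    and yx: "succ_H I P H i y x"
  shows "\<exists>xs \<in> H i. succ_H I P H i xs x \<and> (\<forall>z \<in> G i. \<not> succ_H I P H i z xs)"
proof -
  define D where "D = PiE (I - {i}) H"
  define sc where "sc u v = succ_H I P H i u v" for u v
  have HG: "\<forall>j\<in>I. H j \<subseteq> G j" using star_sub[OF st] by blast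
  have Dne: "D \<noteq> {}" using yx unfolding D_def succ_H_def by auto
  have sc_iff: "sc u v \<longleftrightarrow> (\<forall>z\<in>D. u \<in> P i (z(i := v)))" for u v
    using Dne unfolding sc_def succ_H_def D_def by auto
  have prof: "z(i := v) \<in> PiE I G" if "z \<in> D" "v \<in> G i" for z v
    using that HG i unfolding D_def PiE_def extensional_def by (auto simp: Pi_def)
  have scG: "w \<in> G i" if "sc w v" "v \<in> G i" for w v
  proof -
    obtain z where z: "z \<in> D" using Dne by blast
    thus ?thesis using that sc_iff prof[OF z that(2)] P_into i by blast
  qed
  have trans: "sc u v" if "v \<in> G i" "sc w v" "sc u w" for u v w
    unfolding sc_iff
  proof
    fix z assume z: "z \<in> D"
    have wG: "w \<in> G i" using scG that by blast
    have p1: "z(i := v) \<in> PiE I G" and p2: "z(i := w) \<in> PiE I G" using prof z that(1) wG by auto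
    have "w \<in> P i (z(i := v))" using that(2) z sc_iff by blast
    hence "Q i ((z(i := v))(i := w)) \<subseteq> P i (z(i := v))" using T p1 i unfolding property_T_def by blast
    moreover have "P i (z(i := w)) \<subseteq> Q i (z(i := w))" using T p2 i unfolding property_T_def by blast
    moreover have "u \<in> P i (z(i := w))" using that(3) z sc_iff by blast
    ultimately show "u \<in> P i (z(i := v))" by auto
  qed
  have irr: "\<not> sc v v" if "v \<in> G i" for v
  proof
    assume "sc v v"
    obtain z where z: "z \<in> D" using Dne by blast
    have "v \<in> P i (z(i := v))" using \<open>sc v v\<close> z sc_iff by blast
    thus False using iii_cond i prof[OF z that] by fastforce
  qed
  have clo: "closed (insert v {w. sc w v})" if "v \<in> G i" for v
  proof -
    have "{w. sc w v} = (\<Inter>z\<in>D. P i (z(i := v)))" using sc_iff by auto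
    moreover have "closed (\<Inter>z\<in>D. P i (z(i := v)))"
      using iv_vals i prof that by (intro closed_INT) blast
    ultimately show ?thesis by (simp add: closed_insert)
  qed
  define A where "A = {v \<in> G i. sc v x}"
  define R where "R a b = (a = b \<or> sc b a)" for a b
  have po: "partial_order_on A (relation_of R A)"
  proof -
    have r: "refl_on A (relation_of R A)"
      unfolding refl_on_def relation_of_def R_def by auto
    have t: "trans (relation_of R A)"
    proof (rule transI)
      fix a b c assume ab: "(a, b) \<in> relation_of R A" and bc: "(b, c) \<in> relation_of R A"
      hence "a \<in> A" "b \<in> A" "c \<in> A" "R a b" "R b c" unfolding relation_of_def by auto
      hence "R a c" using trans unfolding R_def A_def by blast
      thus "(a, c) \<in> relation_of R A" using \<open>a \<in> A\<close> \<open>c \<in> A\<close> unfolding relation_of_def by auto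
    qed
    have an: "antisym (relation_of R A)"
    proof (rule antisymI)
      fix a b assume ab: "(a, b) \<in> relation_of R A" and ba: "(b, a) \<in> relation_of R A"
      hence "a \<in> A" "b \<in> A" "R a b" "R b a" unfolding relation_of_def by auto
      thus "a = b" using trans irr unfolding R_def A_def by blast
    qed
    have sb: "relation_of R A \<subseteq> A \<times> A" unfolding relation_of_def by auto
    show ?thesis unfolding partial_order_on_def preorder_on_def using r t an sb by blast
  qed
  have "\<exists>m \<in> A. \<forall>a \<in> A. R m a \<longrightarrow> a = m"
  proof (rule predicate_Zorn[OF po])
    fix C assume C: "C \<in> Chains (relation_of R A)"
    have CA: "C \<subseteq> A" using C unfolding Chains_def relation_of_def by auto
    have chC: "\<forall>a\<in>C. \<forall>b\<in>C. R a b \<or> R b a" using C unfolding Chains_def relation_of_def by auto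
    show "\<exists>u \<in> A. \<forall>a \<in> C. R a u"
    proof (cases "C = {}")
      case True
      then show ?thesis using y yx unfolding A_def sc_def by auto
    next
      case False
      define S where "S c = insert c {w. sc w c}" for c
      have "G i \<inter> \<Inter>(S ` C) \<noteq> {}"
      proof (rule compact_imp_fip)
        show "compact (G i)" using G_compact i by blast
        show "closed T" if "T \<in> S ` C" for T using that CA clo unfolding S_def A_def by auto
        fix F' assume F': "finite F'" "F' \<subseteq> S ` C"
        then obtain F where F: "F \<subseteq> C" "finite F" "F' = S ` F" using finite_subset_image by metis
        show "G i \<inter> \<Inter>F' \<noteq> {}"
        proof (cases "F = {}")
          case True
          then show ?thesis using F x by auto
        next
          case False
          have trC: "\<forall>a\<in>C. \<forall>b\<in>C. \<forall>c\<in>C. R a b \<longrightarrow> R b c \<longrightarrow> R a c"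
            using CA trans unfolding R_def A_def by auto
          obtain m where m: "m \<in> F" "\<forall>c\<in>F. R c m"
            using chain_max[OF F(2) False F(1) chC trC] unfolding R_def by auto
          have "m \<in> G i" using m F CA unfolding A_def by auto
          moreover have "m \<in> \<Inter>F'" using m F unfolding S_def R_def by auto
          ultimately show ?thesis by auto
        qed
      qed
      then obtain u where u: "u \<in> G i" "\<forall>c\<in>C. u \<in> S c" by auto
      obtain c where c: "c \<in> C" using False by auto
      have "u \<in> A"
      proof -
        have "c \<in> A" using c CA by auto
        hence "sc c x" "c \<in> G i" unfolding A_def by auto
        moreover have "u = c \<or> sc u c" using u c unfolding S_def by auto
        ultimately show ?thesis using trans x u unfolding A_def by blast
      qed
      moreover have "\<forall>a\<in>C. R a u" using u unfolding S_def R_def by auto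
      ultimately show ?thesis by blast
    qed
  qed
  then obtain m where m: "m \<in> A" "\<forall>a \<in> A. R m a \<longrightarrow> a = m" by blast
  have mG: "m \<in> G i" and mx: "sc m x" using m unfolding A_def by auto
  have nodom: "\<not> sc z m" if "z \<in> G i" for z
  proof
    assume zm: "sc z m"
    hence "z \<in> A" using trans x mx that unfolding A_def by blast
    hence "z = m" using m zm unfolding R_def by auto
    thus False using zm irr mG by auto
  qed
  have "m \<in> H i"
  proof (rule ccontr)
    assume "m \<notin> H i"
    then obtain w where w: "\<forall>z \<in> D. w \<in> P i (z(i := m))" using star_elim[OF st i mG] unfolding D_def by blast
    hence "sc w m" using sc_iff by auto
    moreover have "w \<in> G i" using scG[OF _ mG] calculation by blast
    ultimately show False using nodom by blast
  qed
  thus ?thesis using mx nodom unfolding sc_def by blast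
qed
theorem corollary1:
  fixes I :: "'i set"
    and G :: "'i \<Rightarrow> 'a::{real_vector,t2_space} set"
    and P Q :: "'i \<Rightarrow> ('i \<Rightarrow> 'a) \<Rightarrow> 'a set"
  assumes lctvs: "lc_tvs TYPE('a)"
    and I_ne: "I \<noteq> {}"
    and G_compact: "\<forall>i \<in> I. compact (G i)"
    and G_convex: "\<forall>i \<in> I. convex (G i)"
    and P_into: "\<forall>i \<in> I. \<forall>x \<in> PiE I G. P i x \<subseteq> G i"
    and Q_into: "\<forall>i \<in> I. \<forall>x \<in> PiE I G. Q i x \<subseteq> G i"
    and T: "property_T I G P Q"
    and i_cond: "\<forall>i \<in> I. \<forall>x \<in> PiE I G. \<forall>y \<in> G i. y \<in> Q i (x(i := y))"
    and ii_cond: "\<forall>i \<in> I. \<forall>x \<in> PiE I G. convex (Q i x) \<and> closed (Q i x)"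
    and iii_cond: "\<forall>i \<in> I. \<forall>x \<in> PiE I G. x i \<notin> P i x"
    and iv_usc: "\<forall>i \<in> I. usc_corr I G (P i)"
    and iv_vals: "\<forall>i \<in> I. \<forall>x \<in> PiE I G. closed (P i x) \<and> convex (P i x)"
  shows
    "(\<forall>H i x y. reduces_star I G P H \<and> i \<in> I \<and> x \<in> G i \<and> y \<in> G i \<and> succ_H I P H i y x \<longrightarrow>
        (\<exists>xs \<in> H i. succ_H I P H i xs x \<and> (\<forall>z \<in> G i. \<not> succ_H I P H i z xs)))
     \<and>
     (\<forall>M. maximal_reduction I G P M \<and> (\<forall>i \<in> I. M i \<noteq> {}) \<longrightarrow>
        (\<forall>M'. maximal_reduction I G P M' \<longrightarrow> (\<forall>i \<in> I. M' i = M i)))"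
proof (intro conjI allI impI)
  fix H i x y
  assume a: "reduces_star I G P H \<and> i \<in> I \<and> x \<in> G i \<and> y \<in> G i \<and> succ_H I P H i y x"
  show "\<exists>xs \<in> H i. succ_H I P H i xs x \<and> (\<forall>z \<in> G i. \<not> succ_H I P H i z xs)"
    using a by (intro parta[OF G_compact P_into T iii_cond iv_vals, of H i x y]) simp_all
next
  fix M M'
  assume "maximal_reduction I G P M \<and> (\<forall>i \<in> I. M i \<noteq> {})" "maximal_reduction I G P M'"
  then have m1: "maximal_reduction I G P M" and m2: "maximal_reduction I G P M'" by simp_all
  show "\<forall>i \<in> I. M' i = M i"
  proof
    fix i assume "i \<in> I"
    then show "M' i = M i" by (rule partb[OF m1 m2])
  qed
qed

end
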